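(* Let $n\ge 0$, $m\ge 1$ and $r\ge 1$ be integers. If $m$ is odd then \[ F_m^{\,n}L_mF_{rm}\;\Big|\;F_{m(r+1)}^{\,n+1}-F_{m(r-1)}^{\,n+1}, \] and if $m$ is even then \[ F_m^{\,n}L_mF_{rm}\;\Big|\;F_{m(r+1)}^{\,n+1}+(-1)^nF_{m(r-1)}^{\,n+1}. \]
   Context: $F_n$ and $L_n$ denote the Fibonacci and Lucas numbers, defined by $F_0=0,F_1=1$, $L_0=2,L_1=1$ and $x_n=x_{n-1}+x_{n-2}$. *)

theory Defs
  imports Main "HOL-Number_Theory.Fib"
begin

fun lucas :: "nat \<Rightarrow> nat" where
  "lucas 0 = 2"
| "lucas (Suc 0) = 1"
| "lucas (Suc (Suc n)) = lucas (Suc n) + lucas n"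

end

theory Submission
  imports Defs
begin

lemma lucas_fib: "int (lucas m) * int (fib (m + j)) = int (fib (2*m + j)) + (-1)^m * int (fib j)"
proof (induction m arbitrary: j rule: lucas.induct)
  case 1 then show ?case by simp
next
  case 2 then show ?case by (simp add: numeral_2_eq_2)
next
  case (3 m)
  have a: "int (lucas (Suc m)) * int (fib (Suc m + Suc j)) = int (fib (2*Suc m + Suc j)) + (-1)^Suc m * int (fib (Suc j))"
    by (rule 3(1))
  have b: "int (lucas m) * int (fib (m + Suc (Suc j))) = int (fib (2*m + Suc (Suc j))) + (-1)^m * int (fib (Suc (Suc j)))"
    by (rule 3(2))
  have e1: "Suc (Suc m) + j = Suc m + Suc j" "m + Suc (Suc j) = Suc m + Suc j" by simp_all
  have e2: "2 * Suc (Suc m) + j = Suc (Suc (2*m + Suc (Suc j)))" "2*Suc m + Suc j = Suc (2*m + Suc (Suc j))" by simp_all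
  show ?case using a b unfolding e1 e2 by (simp add: algebra_simps)
qed

lemma fib_dvd_mult: "fib m dvd fib (m * t)"
proof -
  have "gcd m (m*t) = m" by simp
  hence "gcd (fib m) (fib (m*t)) = fib m" by (metis fib_gcd)
  thus ?thesis by (metis gcd_dvd2)
qed

lemma pow_sum_dvd:
  fixes x y c :: int
  assumes "c dvd x" "c dvd y"
  shows "c ^ n * (x - y) dvd x^(n+1) - y^(n+1)"
proof -
  have "x^(n+1) - y^(n+1) = (x - y) * (\<Sum>i<n+1. y^(n+1 - Suc i) * x^i)"
    by (rule power_diff_sumr2)
  moreover have "c^n dvd (\<Sum>i<n+1. y^(n+1 - Suc i) * x^i)"
  proof (rule dvd_sum)
    fix i assume "i \<in> {..<n+1}"
    hence "n = (n - i) + i" by simp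
    hence "c^n = c^(n-i) * c^i" by (metis power_add)
    moreover have "c^(n-i) dvd y^(n+1 - Suc i)" using assms by (simp add: dvd_power_same)
    moreover have "c^i dvd x^i" using assms by (simp add: dvd_power_same)
    ultimately show "c^n dvd y^(n+1 - Suc i) * x^i" by (simp add: mult_dvd_mono)
  qed
  ultimately show ?thesis by (simp add: mult_dvd_mono mult.commute)
qed

theorem mainTheorem16:
  fixes n m r :: nat
  assumes "m \<ge> 1" and "r \<ge> 1"
  shows "(odd m \<longrightarrow>
            (int (fib m))^n * int (lucas m) * int (fib (r*m)) dvd
              (int (fib (m*(r+1))))^(n+1) - (int (fib (m*(r-1))))^(n+1))
       \<and> (even m \<longrightarrow>
            (int (fib m))^n * int (lucas m) * int (fib (r*m)) dvd
              (int (fib (m*(r+1))))^(n+1) + (-1)^n * (int (fib (m*(r-1))))^(n+1))"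
proof -
  define a where "a = int (fib (m*(r+1)))"
  define b where "b = int (fib (m*(r-1)))"
  have e1: "m + m*(r-1) = r*m" using assms by (cases r) auto
  have e2: "2*m + m*(r-1) = m*(r+1)" using assms by (cases r) auto
  have key: "int (lucas m) * int (fib (r*m)) = a + (-1)^m * b"
    using lucas_fib[of m "m*(r-1)"] unfolding e1 e2 a_def b_def .
  have da: "int (fib m) dvd a" unfolding a_def using fib_dvd_mult[of m "r+1"] by (simp only: int_dvd_int_iff)
  have db: "int (fib m) dvd b" unfolding b_def using fib_dvd_mult[of m "r-1"] by (simp only: int_dvd_int_iff)
  show ?thesis
  proof (intro conjI impI)
    assume "odd m"
    hence "int (lucas m) * int (fib (r*m)) = a - b" using key by simp
    thus "(int (fib m))^n * int (lucas m) * int (fib (r*m)) dvd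
              (int (fib (m*(r+1))))^(n+1) - (int (fib (m*(r-1))))^(n+1)"
      using pow_sum_dvd[OF da db, of n] unfolding a_def b_def by (simp add: mult.assoc)
  next
    assume "even m"
    hence k: "int (lucas m) * int (fib (r*m)) = a - (-b)" using key by simp
    have db': "int (fib m) dvd -b" using db by simp
    have eq: "a^(n+1) - (-b)^(n+1) = a^(n+1) + (-1)^n * b^(n+1)"
      by (simp add: power_minus')
    have "(int (fib m))^n * (a - (-b)) dvd a^(n+1) - (-b)^(n+1)" by (rule pow_sum_dvd[OF da db'])
    hence "(int (fib m))^n * (int (lucas m) * int (fib (r*m))) dvd a^(n+1) + (-1)^n * b^(n+1)"
      by (simp only: k eq)
    thus "(int (fib m))^n * int (lucas m) * int (fib (r*m)) dvd
              (int (fib (m*(r+1))))^(n+1) + (-1)^n * (int (fib (m*(r-1))))^(n+1)"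
      unfolding a_def b_def by (simp add: mult.assoc)
  qed
qed

end
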